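(* Let $p$ and $q$ be (not necessarily distinct) primes, let $k=\mathbb{Z}[\zeta_p,\zeta_q]\subseteq\mathbb{C}$ with $\zeta_p,\zeta_q$ primitive $p$-th and $q$-th roots of unity, let $M$ be a $k$-module, $E=\mathrm{End}_{k}(M)$, $\pi=1-\zeta_p$, $\tau=1-\zeta_q$, and let $A\subseteq E$ be a $k$-subalgebra that is both $p$-good and $q$-good. (1) If $s\in A$ is such that $1+\pi\tau s$ is a unit of $A$ generating a subgroup of $A^*$ in which every element has finite order, then $s=0$. (2) If $s,r\in A$ are such that $1+\pi s$ and $1+\tau r$ are units of $A$ and the subgroup of $A^*$ they generate is torsion (every element has finite order), then $1+\pi s$ and $1+\tau r$ commute.
   Context: For a commutative ring $k$, an element $p\in k$ and a $k$-module $M$, a $k$-subalgebra $A\subseteq\mathrm{End}_k(M)$ is called $p$-good if the endomorphism $p(1-ps)$ of $M$ is injective for every $s\in A$. *)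

theory Defs
  imports "HOL-Computational_Algebra.Primes" "HOL-Algebra.Generated_Groups" Complex_Main
begin

definition prim_root :: "nat \<Rightarrow> complex \<Rightarrow> bool" where
  "prim_root n z \<longleftrightarrow> z ^ n = 1 \<and> (\<forall>j. 0 < j \<and> j < n \<longrightarrow> z ^ j \<noteq> 1)"

inductive_set zring2 :: "complex \<Rightarrow> complex \<Rightarrow> complex set" for a b where
  one: "1 \<in> zring2 a b"
| gen1: "a \<in> zring2 a b"
| gen2: "b \<in> zring2 a b"
| neg: "x \<in> zring2 a b \<Longrightarrow> - x \<in> zring2 a b"
| add: "x \<in> zring2 a b \<Longrightarrow> y \<in> zring2 a b \<Longrightarrow> x + y \<in> zring2 a b"
| mul: "x \<in> zring2 a b \<Longrightarrow> y \<in> zring2 a b \<Longrightarrow> x * y \<in> zring2 a b"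

definition is_module :: "complex set \<Rightarrow> (complex \<Rightarrow> 'm::ab_group_add \<Rightarrow> 'm) \<Rightarrow> bool" where
  "is_module k sm \<longleftrightarrow>
     (\<forall>a\<in>k. \<forall>x y. sm a (x + y) = sm a x + sm a y) \<and>
     (\<forall>a\<in>k. \<forall>b\<in>k. \<forall>x. sm (a + b) x = sm a x + sm b x) \<and>
     (\<forall>a\<in>k. \<forall>b\<in>k. \<forall>x. sm (a * b) x = sm a (sm b x)) \<and>
     (\<forall>x. sm 1 x = x)"

definition endos :: "complex set \<Rightarrow> (complex \<Rightarrow> 'm::ab_group_add \<Rightarrow> 'm) \<Rightarrow> ('m \<Rightarrow> 'm) set" where
  "endos k sm = {f. (\<forall>x y. f (x + y) = f x + f y) \<and> (\<forall>a\<in>k. \<forall>x. f (sm a x) = sm a (f x))}"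

definition is_subalgebra :: "complex set \<Rightarrow> (complex \<Rightarrow> 'm::ab_group_add \<Rightarrow> 'm) \<Rightarrow> ('m \<Rightarrow> 'm) set \<Rightarrow> bool" where
  "is_subalgebra k sm A \<longleftrightarrow>
     A \<subseteq> endos k sm \<and> id \<in> A \<and>
     (\<forall>f\<in>A. \<forall>g\<in>A. (\<lambda>x. f x + g x) \<in> A) \<and>
     (\<forall>f\<in>A. \<forall>g\<in>A. f \<circ> g \<in> A) \<and>
     (\<forall>a\<in>k. \<forall>f\<in>A. (\<lambda>x. sm a (f x)) \<in> A)"

definition good :: "(complex \<Rightarrow> 'm::ab_group_add \<Rightarrow> 'm) \<Rightarrow> complex \<Rightarrow> ('m \<Rightarrow> 'm) set \<Rightarrow> bool" where
  "good sm c A \<longleftrightarrow> (\<forall>s\<in>A. inj (\<lambda>x. sm c (x - sm c (s x))))"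

definition alg_monoid :: "('m \<Rightarrow> 'm) set \<Rightarrow> ('m \<Rightarrow> 'm) monoid" where
  "alg_monoid A = \<lparr>carrier = A, mult = (\<circ>), one = id\<rparr>"

definition torsion_group :: "('a, 'b) monoid_scheme \<Rightarrow> bool" where
  "torsion_group G \<longleftrightarrow> (\<forall>g\<in>carrier G. \<exists>n::nat. n > 0 \<and> g [^]\<^bsub>G\<^esub> n = \<one>\<^bsub>G\<^esub>)"

definition subgroup_gen :: "('a, 'b) monoid_scheme \<Rightarrow> 'a set \<Rightarrow> 'a monoid" where
  "subgroup_gen G S = \<lparr>carrier = generate G S, mult = mult G, one = one G\<rparr>"

end

theory Submission
  imports Defs "HOL-Computational_Algebra.Polynomial"
begin


lemma prim_root_basic:
  assumes "prime p" "prim_root p z"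
  shows "z ^ p = 1" "z \<noteq> 1" "z \<noteq> 0" "(\<Sum>i<p. z ^ i) = 0"
proof -
  have p2: "p \<ge> 2" using assms(1) prime_ge_2_nat by blast
  show zp: "z ^ p = 1" using assms(2) by (simp add: prim_root_def)
  have "\<forall>j. 0 < j \<and> j < p \<longrightarrow> z ^ j \<noteq> 1" using assms(2) by (simp add: prim_root_def)
  hence "z ^ 1 \<noteq> 1" using p2 by (metis less_le_trans one_less_numeral_iff semiring_norm(76) zero_less_one)
  thus z1: "z \<noteq> 1" by simp
  show "z \<noteq> 0" proof assume "z = 0" thus False using zp p2 by (simp add: power_0_left) qed
  show "(\<Sum>i<p. z ^ i) = 0" using geometric_sum[OF z1, of p] zp by simp
qed

lemma prim_root_p_eq:
  assumes "prime p" "prim_root p z"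
  shows "of_nat p = (1 - z) * (\<Sum>i<p. \<Sum>j<i. z ^ j)"
proof -
  have "(1 - z) * (\<Sum>i<p. \<Sum>j<i. z ^ j) = (\<Sum>i<p. (1 - z) * (\<Sum>j<i. z ^ j))"
    by (simp add: sum_distrib_left)
  also have "\<dots> = (\<Sum>i<p. 1 - z ^ i)" by (simp add: one_diff_power_eq)
  also have "\<dots> = of_nat p - (\<Sum>i<p. z ^ i)" by (simp add: sum_subtractf)
  also have "\<dots> = of_nat p" using prim_root_basic[OF assms] by simp
  finally show ?thesis by simp
qed

definition pe :: "nat \<Rightarrow> complex \<Rightarrow> complex" where
  "pe p z = (\<Sum>j\<in>{1..<p}. of_nat ((p choose j) div p) * (- z) ^ j) + (if p = 2 then 1 else 0)"

lemma prim_root_pow_eq: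
  assumes "prime p" "prim_root p z"
  shows "(1 - z) ^ p = of_nat p * pe p z"
proof -
  have p2: "p \<ge> 2" using assms(1) prime_ge_2_nat by blast
  have zp: "z ^ p = 1" using prim_root_basic[OF assms] by simp
  define f where "f j = of_nat (p choose j) * (- z) ^ j * (1::complex) ^ (p - j)" for j
  have "(1 - z) ^ p = (- z + 1) ^ p" by simp
  also have "\<dots> = (\<Sum>j\<le>p. f j)" unfolding f_def by (rule binomial_ring)
  also have "{..p} = insert 0 (insert p {1..<p})" using p2 by auto
  also have "(\<Sum>j\<in>insert 0 (insert p {1..<p}). f j) = f 0 + (f p + (\<Sum>j\<in>{1..<p}. f j))"
    using p2 by (simp add: sum.insert)
  also have "(\<Sum>j\<in>{1..<p}. f j) = of_nat p * (\<Sum>j\<in>{1..<p}. of_nat ((p choose j) div p) * (- z) ^ j)"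
    unfolding sum_distrib_left
  proof (rule sum.cong)
    fix j assume j: "j \<in> {1..<p}"
    have "p dvd (p choose j)" using j p2 assms(1) by (intro dvd_choose_prime) auto
    hence "(p choose j) = p * ((p choose j) div p)" by simp
    hence "(of_nat (p choose j) :: complex) = of_nat p * of_nat ((p choose j) div p)"
      by (metis of_nat_mult)
    thus "f j = of_nat p * (of_nat ((p choose j) div p) * (- z) ^ j)" by (simp add: f_def)
  qed simp
  also have "f 0 + f p = of_nat p * (if p = 2 then 1 else 0)"
  proof (cases "p = 2")
    case True thus ?thesis using zp by (simp add: f_def)
  next
    case False
    hence "odd p" using assms(1) prime_odd_nat p2 by auto
    hence "(- z) ^ p = - 1" using zp by (simp add: power_minus_odd)
    thus ?thesis using False by (simp add: f_def)
  qed
  hence "f 0 + (f p + of_nat p * (\<Sum>j\<in>{1..<p}. of_nat ((p choose j) div p) * (- z) ^ j))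
      = of_nat p * pe p z"
    by (simp add: pe_def algebra_simps)
  finally show ?thesis .
qed

lemma prim_root_same:
  assumes "prime p" "prim_root p z" "prim_root p w"
  shows "\<exists>j. w = z ^ j"
proof -
  have p0: "p > 0" using assms(1) prime_gt_0_nat by blast
  have zp: "z ^ p = 1" "z \<noteq> 0" using prim_root_basic[OF assms(1,2)] by auto
  have inj: "inj_on (\<lambda>j. z ^ j) {..<p}"
  proof -
    have *: "i = j" if "i \<le> j" "j < p" "z ^ i = z ^ j" for i j
    proof (rule ccontr)
      assume "i \<noteq> j"
      hence "0 < j - i" "j - i < p" using that by auto
      moreover have "z ^ i * z ^ (j - i) = z ^ i * 1"
      proof -
        have "z ^ i * z ^ (j - i) = z ^ j" using that(1) by (simp flip: power_add)
        thus ?thesis using that(3) by simp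
      qed
      hence "z ^ (j - i) = 1" using zp(2) by (metis mult_left_cancel power_not_zero)
      ultimately show False using assms(2) by (simp add: prim_root_def)
    qed
    show ?thesis unfolding inj_on_def
    proof (intro ballI impI)
      fix i j assume "i \<in> {..<p}" "j \<in> {..<p}" "z ^ i = z ^ j"
      thus "i = j" using *[of i j] *[of j i] by (cases "i \<le> j") auto
    qed
  qed
  have sub: "(\<lambda>j. z ^ j) ` {..<p} \<subseteq> {x. x ^ p = 1}"
  proof
    fix x assume "x \<in> (\<lambda>j. z ^ j) ` {..<p}"
    then obtain j where "x = z ^ j" by auto
    hence "x ^ p = (z ^ p) ^ j" by (metis power_mult mult.commute)
    thus "x \<in> {x. x ^ p = 1}" using zp by simp
  qed
  have "card ((\<lambda>j. z ^ j) ` {..<p}) = card {x::complex. x ^ p = 1}"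
    using card_image[OF inj] card_roots_unity_eq[OF p0] by simp
  hence eq: "(\<lambda>j. z ^ j) ` {..<p} = {x. x ^ p = 1}"
    using card_subset_eq[OF finite_roots_unity[of p] sub] p0 by simp
  have "w \<in> {x. x ^ p = 1}" using assms(3) by (simp add: prim_root_def)
  thus ?thesis using eq by auto
qed



lemma ring_id1:
  fixes A L B R G Y Z W S :: "'a::comm_ring_1"
  assumes "A * L = 1 - B * R * G" "Y = R * Z"
  shows "A * (L * (1 + Y * S) + Y * W) = 1 - R * (B * G * (1 + Y * S) - Z * S - A * (Z * W))"
proof -
  have "A * (L * (1 + Y * S) + Y * W) = (A * L) * (1 + Y * S) + A * Y * W" by (simp add: algebra_simps)
  also have "\<dots> = (1 - B * R * G) * (1 + R * Z * S) + A * (R * Z) * W" using assms by simp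
  also have "\<dots> = 1 - R * (B * G * (1 + R * Z * S) - Z * S - A * (Z * W))" by (simp add: algebra_simps)
  finally show ?thesis using assms(2) by simp
qed

lemma ring_id2:
  fixes L R F X Y Z S V :: "'a::comm_ring_1"
  assumes "Y = R * Z" "V = L * R * F * X"
  shows "L * (1 + Y * S) + V = L * (1 - R * (- (Z * S) - F * X))"
  using assms by (simp add: algebra_simps)

lemma ring_id3: "(1 + Y) * (1 + Y * P) = 1 + Y * (1 + P + Y * (P::'a::comm_ring_1))"
  by (simp add: algebra_simps)

lemma pconst_mult: "[:a * b:] = [:a:] * ([:b:] :: complex poly)" by simp
lemma pconst_pow: "[:a:] ^ n = ([:a ^ n:] :: complex poly)" by (induction n) (simp_all add: one_pCons mult.commute)
lemma plin_pow: "[:0, c:] ^ n = [:c ^ n:] * ([:0, 1:] :: complex poly) ^ n"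
proof -
  have e: "[:0, c:] = [:c:] * ([:0, 1:] :: complex poly)" by simp
  have "[:0, c:] ^ n = ([:c:] * [:0, 1:]) ^ n" by (simp only: e)
  hence "[:0, c:] ^ n = [:c:] ^ n * ([:0, 1:] :: complex poly) ^ n" by (simp only: power_mult_distrib)
  thus ?thesis by (simp add: pconst_pow)
qed

locale setting =
  fixes k :: "complex set" and sm :: "complex \<Rightarrow> 'm::ab_group_add \<Rightarrow> 'm" and A :: "('m \<Rightarrow> 'm) set"
  assumes k_one: "1 \<in> k" and k_neg: "a \<in> k \<Longrightarrow> - a \<in> k"
    and k_add: "a \<in> k \<Longrightarrow> b \<in> k \<Longrightarrow> a + b \<in> k"
    and k_mul: "a \<in> k \<Longrightarrow> b \<in> k \<Longrightarrow> a * b \<in> k"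
    and modl: "is_module k sm" and subalg: "is_subalgebra k sm A"
begin

lemma k_zero: "0 \<in> k" using k_add[OF k_one k_neg[OF k_one]] by simp
lemma k_diff: "a \<in> k \<Longrightarrow> b \<in> k \<Longrightarrow> a - b \<in> k" using k_add k_neg by fastforce
lemma k_of_nat: "of_nat n \<in> k" by (induction n) (auto intro: k_add k_one k_zero)
lemma k_of_int: "of_int n \<in> k"
  by (cases n) (auto intro: k_of_nat k_neg simp del: of_nat_Suc)
lemma k_pow: "a \<in> k \<Longrightarrow> a ^ n \<in> k" by (induction n) (auto intro: k_mul k_one)
lemma k_sum: "(\<And>i. i \<in> I \<Longrightarrow> f i \<in> k) \<Longrightarrow> sum f I \<in> k"
  by (induction I rule: infinite_finite_induct) (auto intro: k_add k_zero)

lemma sm_add_r: "a \<in> k \<Longrightarrow> sm a (x + y) = sm a x + sm a y" using modl by (simp add: is_module_def)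
lemma sm_add_l: "a \<in> k \<Longrightarrow> b \<in> k \<Longrightarrow> sm (a + b) x = sm a x + sm b x" using modl by (simp add: is_module_def)
lemma sm_mult: "a \<in> k \<Longrightarrow> b \<in> k \<Longrightarrow> sm (a * b) x = sm a (sm b x)" using modl by (simp add: is_module_def)
lemma sm_one: "sm 1 x = x" using modl by (simp add: is_module_def)
lemma sm_zero_r: "a \<in> k \<Longrightarrow> sm a 0 = 0" using sm_add_r[of a 0 0] by simp
lemma sm_zero_l: "sm 0 x = 0" using sm_add_l[OF k_zero k_zero, of x] by simp
lemma sm_neg_r: "a \<in> k \<Longrightarrow> sm a (- x) = - sm a x"
  using sm_add_r[of a x "-x"] sm_zero_r[of a] by (metis add.right_inverse minus_unique)
lemma sm_diff_r: "a \<in> k \<Longrightarrow> sm a (x - y) = sm a x - sm a y"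
  using sm_add_r[of a x "-y"] sm_neg_r by simp
lemma sm_neg_l: "a \<in> k \<Longrightarrow> sm (- a) x = - sm a x"
  using sm_add_l[of a "-a" x] sm_zero_l k_neg by (metis add.right_inverse minus_unique)
lemma sm_diff_l: "a \<in> k \<Longrightarrow> b \<in> k \<Longrightarrow> sm (a - b) x = sm a x - sm b x"
  using sm_add_l[of a "-b" x] sm_neg_l k_neg by simp
lemma sm_sum_l: "(\<And>i. i \<in> I \<Longrightarrow> f i \<in> k) \<Longrightarrow> sm (sum f I) x = (\<Sum>i\<in>I. sm (f i) x)"
  by (induction I rule: infinite_finite_induct) (auto simp: sm_zero_l sm_add_l k_sum)
lemma sm_sum_r: "a \<in> k \<Longrightarrow> sm a (sum f I) = (\<Sum>i\<in>I. sm a (f i))"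
  by (induction I rule: infinite_finite_induct) (auto simp: sm_zero_r sm_add_r)

lemma A_endo: "f \<in> A \<Longrightarrow> f \<in> endos k sm" using subalg by (auto simp: is_subalgebra_def)
lemma A_add_hom: "f \<in> A \<Longrightarrow> f (x + y) = f x + f y" using A_endo by (simp add: endos_def)
lemma A_sm: "f \<in> A \<Longrightarrow> a \<in> k \<Longrightarrow> f (sm a x) = sm a (f x)" using A_endo by (simp add: endos_def)
lemma A_zero_hom: "f \<in> A \<Longrightarrow> f 0 = 0" using A_add_hom[of f 0 0] by simp
lemma A_neg_hom: "f \<in> A \<Longrightarrow> f (- x) = - f x"
  using A_add_hom[of f x "-x"] A_zero_hom by (metis add.right_inverse minus_unique)
lemma A_diff_hom: "f \<in> A \<Longrightarrow> f (x - y) = f x - f y"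
  using A_add_hom[of f x "-y"] A_neg_hom by simp
lemma A_sum_hom: "f \<in> A \<Longrightarrow> f (sum g I) = (\<Sum>i\<in>I. f (g i))"
  by (induction I rule: infinite_finite_induct) (auto simp: A_zero_hom A_add_hom)

lemma A_id: "id \<in> A" using subalg by (simp add: is_subalgebra_def)
lemma A_id': "(\<lambda>x. x) \<in> A" using A_id by (simp add: id_def)
lemma A_plus: "f \<in> A \<Longrightarrow> g \<in> A \<Longrightarrow> (\<lambda>x. f x + g x) \<in> A" using subalg by (simp add: is_subalgebra_def)
lemma A_comp: "f \<in> A \<Longrightarrow> g \<in> A \<Longrightarrow> f \<circ> g \<in> A" using subalg by (simp add: is_subalgebra_def)
lemma A_comp': "f \<in> A \<Longrightarrow> g \<in> A \<Longrightarrow> (\<lambda>x. f (g x)) \<in> A" using A_comp by (simp add: comp_def)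
lemma A_scal: "a \<in> k \<Longrightarrow> f \<in> A \<Longrightarrow> (\<lambda>x. sm a (f x)) \<in> A" using subalg by (simp add: is_subalgebra_def)
lemma A_zero: "(\<lambda>x. 0) \<in> A" using A_scal[OF k_zero A_id'] by (simp add: sm_zero_l)
lemma A_neg: "f \<in> A \<Longrightarrow> (\<lambda>x. - f x) \<in> A"
  using A_scal[OF k_neg[OF k_one], of f] by (simp add: sm_neg_l[OF k_one] sm_one)
lemma A_minus: "f \<in> A \<Longrightarrow> g \<in> A \<Longrightarrow> (\<lambda>x. f x - g x) \<in> A"
  using A_plus[OF _ A_neg] by (simp add: )
lemma A_funpow: "f \<in> A \<Longrightarrow> f ^^ n \<in> A"
  by (induction n) (auto simp: A_id A_comp)
lemma A_sum: "(\<And>i. i \<in> I \<Longrightarrow> g i \<in> A) \<Longrightarrow> (\<lambda>x. \<Sum>i\<in>I. g i x) \<in> A"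
  by (induction I rule: infinite_finite_induct) (auto simp: A_zero A_plus)

definition kpoly :: "complex poly \<Rightarrow> bool" where "kpoly P \<longleftrightarrow> (\<forall>i. coeff P i \<in> k)"

lemma kpoly_coeff: "kpoly P \<Longrightarrow> coeff P i \<in> k" by (simp add: kpoly_def)
lemma kpoly_0: "kpoly 0" by (simp add: kpoly_def k_zero)
lemma kpoly_pCons: "a \<in> k \<Longrightarrow> kpoly P \<Longrightarrow> kpoly (pCons a P)"
  by (auto simp: kpoly_def coeff_pCons split: nat.split)
lemma kpoly_pCons_iff: "kpoly (pCons a P) \<longleftrightarrow> a \<in> k \<and> kpoly P"
  apply (auto simp: kpoly_pCons)
  apply (metis coeff_pCons_0 kpoly_def)
  by (metis coeff_pCons_Suc kpoly_def)
lemma kpoly_const: "a \<in> k \<Longrightarrow> kpoly [:a:]" by (simp add: kpoly_pCons kpoly_0)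
lemma kpoly_add: "kpoly P \<Longrightarrow> kpoly Q \<Longrightarrow> kpoly (P + Q)" by (simp add: kpoly_def k_add)
lemma kpoly_neg: "kpoly P \<Longrightarrow> kpoly (- P)" by (simp add: kpoly_def k_neg)
lemma kpoly_diff: "kpoly P \<Longrightarrow> kpoly Q \<Longrightarrow> kpoly (P - Q)" by (simp add: kpoly_def k_diff)
lemma kpoly_smult: "a \<in> k \<Longrightarrow> kpoly P \<Longrightarrow> kpoly (smult a P)" by (simp add: kpoly_def k_mul)
lemma kpoly_mult: "kpoly P \<Longrightarrow> kpoly Q \<Longrightarrow> kpoly (P * Q)"
  by (auto simp: kpoly_def coeff_mult intro!: k_sum k_mul)
lemma kpoly_1: "kpoly 1" by (simp add: kpoly_const k_one one_pCons)
lemma kpoly_X: "kpoly [:0,1:]" by (simp add: kpoly_pCons k_one k_zero kpoly_0)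
lemma kpoly_pow: "kpoly P \<Longrightarrow> kpoly (P ^ n)" by (induction n) (auto simp: kpoly_1 kpoly_mult)
lemma kpoly_of_nat: "kpoly (of_nat n)" by (simp add: of_nat_poly kpoly_const k_of_nat)
lemma kpoly_of_int: "kpoly (of_int n)" by (simp add: of_int_poly kpoly_const k_of_int)
lemma kpoly_sum: "(\<And>i. i \<in> I \<Longrightarrow> kpoly (f i)) \<Longrightarrow> kpoly (sum f I)"
  by (induction I rule: infinite_finite_induct) (auto intro: kpoly_add kpoly_0)

definition ev :: "('m \<Rightarrow> 'm) \<Rightarrow> complex poly \<Rightarrow> 'm \<Rightarrow> 'm" where
  "ev t P x = (\<Sum>i\<le>degree P. sm (coeff P i) ((t ^^ i) x))"

lemma ev_bound:
  assumes "degree P < N" shows "ev t P x = (\<Sum>i<N. sm (coeff P i) ((t ^^ i) x))"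
  unfolding ev_def
proof (rule sum.mono_neutral_left)
  show "{..degree P} \<subseteq> {..<N}" using assms by auto
  show "\<forall>i\<in>{..<N} - {..degree P}. sm (coeff P i) ((t ^^ i) x) = 0"
    by (auto simp: coeff_eq_0 sm_zero_l)
qed auto

lemma ev_add: "kpoly P \<Longrightarrow> kpoly Q \<Longrightarrow> ev t (P + Q) x = ev t P x + ev t Q x"
proof -
  assume P: "kpoly P" and Q: "kpoly Q"
  define N where "N = Suc (max (degree P) (degree Q))"
  have "degree (P + Q) < N" unfolding N_def using degree_add_le_max[of P Q] by linarith
  hence "ev t (P + Q) x = (\<Sum>i<N. sm (coeff (P+Q) i) ((t ^^ i) x))" by (rule ev_bound)
  also have "\<dots> = (\<Sum>i<N. sm (coeff P i) ((t ^^ i) x) + sm (coeff Q i) ((t ^^ i) x))"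
    by (simp add: sm_add_l kpoly_coeff P Q)
  also have "\<dots> = ev t P x + ev t Q x"
  proof -
    have b1: "ev t P x = (\<Sum>i<N. sm (coeff P i) ((t ^^ i) x))" by (rule ev_bound) (simp add: N_def)
    have b2: "ev t Q x = (\<Sum>i<N. sm (coeff Q i) ((t ^^ i) x))" by (rule ev_bound) (simp add: N_def)
    show ?thesis by (simp only: b1 b2 sum.distrib)
  qed
  finally show ?thesis .
qed

lemma ev_smult: "a \<in> k \<Longrightarrow> kpoly Q \<Longrightarrow> ev t (smult a Q) x = sm a (ev t Q x)"
proof -
  assume a: "a \<in> k" and Q: "kpoly Q"
  define N where "N = Suc (degree Q)"
  have "ev t (smult a Q) x = (\<Sum>i<N. sm (coeff (smult a Q) i) ((t ^^ i) x))"
    by (rule ev_bound) (simp add: N_def)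
  also have "\<dots> = (\<Sum>i<N. sm a (sm (coeff Q i) ((t ^^ i) x)))"
    by (simp add: sm_mult a kpoly_coeff Q)
  also have "\<dots> = sm a (ev t Q x)"
  proof -
    have b: "ev t Q x = (\<Sum>i<N. sm (coeff Q i) ((t ^^ i) x))" by (rule ev_bound) (simp add: N_def)
    show ?thesis by (simp only: b sm_sum_r[OF a])
  qed
  finally show ?thesis .
qed

lemma ev_const: "ev t [:a:] x = sm a x" by (simp add: ev_def)
lemma ev_1: "ev t 1 x = x" by (simp add: ev_def sm_one)
lemma ev_0: "ev t 0 x = 0" by (simp add: ev_def sm_zero_l)

lemma ev_pCons0: "t \<in> A \<Longrightarrow> kpoly R \<Longrightarrow> ev t (pCons 0 R) x = t (ev t R x)"
proof -
  assume t: "t \<in> A" and R: "kpoly R"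
  define N where "N = Suc (degree R)"
  have "ev t (pCons 0 R) x = (\<Sum>i<Suc N. sm (coeff (pCons 0 R) i) ((t ^^ i) x))"
    by (rule ev_bound) (simp add: N_def degree_pCons_le le_imp_less_Suc)
  also have "\<dots> = (\<Sum>i<N. sm (coeff R i) ((t ^^ Suc i) x))"
    by (subst sum.lessThan_Suc_shift) (simp add: sm_zero_l)
  also have "\<dots> = (\<Sum>i<N. t (sm (coeff R i) ((t ^^ i) x)))"
    by (simp add: A_sm t kpoly_coeff R)
  also have "\<dots> = t (ev t R x)"
  proof -
    have b: "ev t R x = (\<Sum>i<N. sm (coeff R i) ((t ^^ i) x))" by (rule ev_bound) (simp add: N_def)
    show ?thesis by (simp only: b A_sum_hom[OF t])
  qed
  finally show ?thesis .
qed

lemma ev_mult: "t \<in> A \<Longrightarrow> kpoly P \<Longrightarrow> kpoly Q \<Longrightarrow> ev t (P * Q) x = ev t P (ev t Q x)"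
proof (induction P arbitrary: x rule: pCons_induct)
  case 0 then show ?case by (simp add: ev_0)
next
  case (pCons a P)
  have a: "a \<in> k" and P: "kpoly P" using pCons.prems kpoly_pCons_iff by auto
  have e: "pCons a P = [:a:] + pCons 0 P" by simp
  have "ev t (pCons a P * Q) x = ev t (smult a Q + pCons 0 (P * Q)) x" by simp
  also have "\<dots> = sm a (ev t Q x) + t (ev t P (ev t Q x))"
    using pCons by (simp add: ev_add ev_smult ev_pCons0 kpoly_smult kpoly_pCons kpoly_mult P a k_zero)
  also have "\<dots> = ev t (pCons a P) (ev t Q x)"
  proof -
    have "ev t (pCons a P) (ev t Q x) = ev t ([:a:] + pCons 0 P) (ev t Q x)" by (simp only: e)
    also have "\<dots> = sm a (ev t Q x) + t (ev t P (ev t Q x))"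
      by (simp only: ev_add[OF kpoly_const[OF a] kpoly_pCons[OF k_zero P]] ev_const ev_pCons0[OF pCons.prems(1) P])
    finally show ?thesis by simp
  qed
  finally show ?case .
qed

lemma ev_pow: "t \<in> A \<Longrightarrow> kpoly P \<Longrightarrow> ev t (P ^ n) x = (ev t P ^^ n) x"
  by (induction n arbitrary: x) (simp_all add: ev_1 ev_mult kpoly_pow)

lemma ev_X: "ev t [:0,1:] x = t x" by (simp add: ev_def sm_one sm_zero_l)

lemma ev_in_A: "t \<in> A \<Longrightarrow> kpoly P \<Longrightarrow> ev t P \<in> A"
  unfolding ev_def[abs_def]
  by (intro A_sum A_scal kpoly_coeff A_funpow)

lemma ev_comm: "t \<in> A \<Longrightarrow> kpoly P \<Longrightarrow> kpoly Q \<Longrightarrow> ev t P (ev t Q x) = ev t Q (ev t P x)"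
  by (metis ev_mult mult.commute)


lemma ev_neg: "kpoly Q \<Longrightarrow> ev t (- Q) x = - ev t Q x"
proof -
  assume Q: "kpoly Q"
  have "- Q = smult (-1) Q" by simp
  hence "ev t (- Q) x = sm (-1) (ev t Q x)" using ev_smult[OF k_neg[OF k_one] Q] by simp
  thus ?thesis by (simp add: sm_neg_l[OF k_one] sm_one)
qed

lemma ev_diff: "kpoly P \<Longrightarrow> kpoly Q \<Longrightarrow> ev t (P - Q) x = ev t P x - ev t Q x"
  using ev_add[of P "- Q" t x] ev_neg[of Q t x] kpoly_neg by simp

lemma ev_cmult: "a \<in> k \<Longrightarrow> t \<in> A \<Longrightarrow> kpoly Q \<Longrightarrow> ev t ([:a:] * Q) x = sm a (ev t Q x)"
  by (simp add: ev_smult)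

lemma L_crit:
  assumes rho: "\<rho> \<in> k" and L: "\<forall>f\<in>A. \<forall>x. x = sm \<rho> (f x) \<longrightarrow> x = 0"
    and t: "t \<in> A" and Q: "kpoly Q" and ev0: "ev t (1 - [:\<rho>:] * Q) x = 0"
  shows "x = 0"
proof -
  have "ev t (1 - [:\<rho>:] * Q) x = x - sm \<rho> (ev t Q x)"
    by (simp add: ev_diff kpoly_1 kpoly_smult rho Q ev_1 ev_smult)
  hence "x = sm \<rho> (ev t Q x)" using ev0 by simp
  thus ?thesis using L ev_in_A[OF t Q] by blast
qed

lemma binom_decomp:
  assumes l: "prime l" and c: "c \<in> k"
  shows "\<exists>S. kpoly S \<and> [:1,c:] ^ l = 1 + [:0,c:] * ([:of_nat l:] * (1 + [:0,c:] * S) + [:0,c:] ^ (l - 1))"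
proof -
  define Y where "Y = [:0,c:]"
  have l2: "l \<ge> 2" using l prime_ge_2_nat by blast
  have KY: "kpoly Y" unfolding Y_def by (simp add: kpoly_pCons k_zero c kpoly_const)
  define B where "B j = (l choose j) div l" for j
  define S where "S = (\<Sum>j\<in>{2..<l}. of_nat (B j) * Y ^ (j - 2))"
  have KS: "kpoly S" unfolding S_def by (intro kpoly_sum kpoly_mult kpoly_of_nat kpoly_pow KY)
  define f where "f j = of_nat (l choose j) * Y ^ j * (1::complex poly) ^ (l - j)" for j
  have "[:1,c:] = Y + 1" by (simp add: Y_def one_pCons)
  hence "[:1,c:] ^ l = (\<Sum>j\<le>l. f j)" unfolding f_def by (simp add: binomial_ring)
  also have "{..l} = insert 0 (insert l {1..<l})" using l2 by auto
  also have "(\<Sum>j\<in>insert 0 (insert l {1..<l}). f j) = f 0 + (f l + (\<Sum>j\<in>{1..<l}. f j))"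
    using l2 by (simp add: sum.insert)
  also have "(\<Sum>j\<in>{1..<l}. f j) = of_nat l * (\<Sum>j\<in>{1..<l}. of_nat (B j) * Y ^ j)"
    unfolding sum_distrib_left
  proof (rule sum.cong)
    fix j assume j: "j \<in> {1..<l}"
    have "l dvd (l choose j)" using j l2 l by (intro dvd_choose_prime) auto
    hence "(l choose j) = l * B j" by (simp add: B_def)
    hence "(of_nat (l choose j) :: complex poly) = of_nat l * of_nat (B j)"
      by (metis of_nat_mult)
    thus "f j = of_nat l * (of_nat (B j) * Y ^ j)" by (simp add: f_def)
  qed simp
  also have "{1..<l} = insert 1 {2..<l}" using l2 by auto
  also have "(\<Sum>j\<in>insert 1 {2..<l}. of_nat (B j) * Y ^ j) = of_nat (B 1) * Y + (\<Sum>j\<in>{2..<l}. of_nat (B j) * Y ^ j)"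
    by (simp add: sum.insert)
  also have "B 1 = 1" using l2 by (simp add: B_def)
  also have "(\<Sum>j\<in>{2..<l}. of_nat (B j) * Y ^ j) = Y * Y * S"
    unfolding S_def sum_distrib_left
  proof (rule sum.cong)
    fix j assume "j \<in> {2..<l}"
    hence "j = Suc (Suc (j - 2))" by auto
    hence "Y ^ j = Y * Y * Y ^ (j - 2)" by (metis power_Suc mult.assoc)
    thus "of_nat (B j) * Y ^ j = Y * Y * (of_nat (B j) * Y ^ (j - 2))" by (simp add: algebra_simps)
  qed simp
  also have "f 0 = 1" by (simp add: f_def)
  also have "f l = Y * Y ^ (l - 1)" using l2 by (simp add: f_def power_eq_if)
  finally have "[:1,c:] ^ l = 1 + Y * ([:of_nat l:] * (1 + Y * S) + Y ^ (l - 1))"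
    by (simp add: algebra_simps of_nat_poly)
  thus ?thesis using KS unfolding Y_def by blast
qed

lemma good_inj:
  assumes g: "good sm (of_nat p) A" and x: "sm (of_nat p) x = 0" shows "x = 0"
proof -
  have "inj (\<lambda>x. sm (of_nat p) (x - sm (of_nat p) ((\<lambda>x. 0) x)))"
    using bspec[OF g[unfolded good_def] A_zero] by simp
  hence "inj (\<lambda>x. sm (of_nat p) x)" by (simp add: sm_zero_r k_of_nat)
  moreover have "sm (of_nat p) 0 = 0" by (simp add: sm_zero_r k_of_nat)
  ultimately show ?thesis using x by (metis injD)
qed

lemma pe_in_k: "z \<in> k \<Longrightarrow> pe p z \<in> k"
  unfolding pe_def by (intro k_add k_sum k_mul k_of_nat k_pow k_neg) (auto intro: k_one k_zero)

lemma gam_in_k: "z \<in> k \<Longrightarrow> (\<Sum>i<p. \<Sum>j<i. z ^ j) \<in> k"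
  by (intro k_sum k_pow)

lemma good_L:
  assumes p: "prime p" and z: "prim_root p z" and zk: "z \<in> k" and g: "good sm (of_nat p) A"
  shows "\<forall>f\<in>A. \<forall>x. x = sm (1 - z) (f x) \<longrightarrow> x = 0"
proof (intro ballI allI impI)
  fix f x assume f: "f \<in> A" and x: "x = sm (1 - z) (f x)"
  define \<rho> where "\<rho> = 1 - z"
  have rk: "\<rho> \<in> k" unfolding \<rho>_def by (intro k_diff k_one zk)
  have it: "x = sm (\<rho> ^ n) ((f ^^ n) x)" for n
  proof (induction n)
    case 0 then show ?case by (simp add: sm_one)
  next
    case (Suc n)
    have "x = sm \<rho> (f x)" unfolding \<rho>_def by (rule x)
    also have "\<dots> = sm \<rho> (f (sm (\<rho> ^ n) ((f ^^ n) x)))" by (rule arg_cong[where f="\<lambda>y. sm \<rho> (f y)"], rule Suc)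
    also have "\<dots> = sm (\<rho> ^ Suc n) ((f ^^ Suc n) x)"
      by (simp add: A_sm f k_pow rk sm_mult)
    finally show ?case .
  qed
  define e where "e = pe p z"
  have ek: "e \<in> k" unfolding e_def by (rule pe_in_k[OF zk])
  define g' where "g' = (\<lambda>y. sm e ((f ^^ p) y))"
  have g'A: "g' \<in> A" unfolding g'_def by (intro A_scal ek A_funpow f)
  have "\<rho> ^ p = of_nat p * e" unfolding \<rho>_def e_def by (rule prim_root_pow_eq[OF p z])
  note pw = this
  from it[of p] have "x = sm (\<rho> ^ p) ((f ^^ p) x)" .
  also have "\<dots> = sm (of_nat p) (g' x)" by (simp add: pw sm_mult k_of_nat ek g'_def)
  finally have x2: "x = sm (of_nat p) (g' x)" .
  hence x3: "x - sm (of_nat p) (g' x) = 0" by (metis right_minus_eq)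
  define h where "h = (\<lambda>y. sm (of_nat p) (y - sm (of_nat p) (g' y)))"
  have i: "inj h" using g g'A unfolding good_def h_def by blast
  have e: "h x = h 0"
    unfolding h_def by (simp add: x3 A_zero_hom[OF g'A] sm_zero_r k_of_nat)
  show "x = 0" using injD[OF i e] .
qed

lemma rho_inj:
  assumes p: "prime p" and z: "prim_root p z" and zk: "z \<in> k" and g: "good sm (of_nat p) A"
    and x: "sm (1 - z) x = 0"
  shows "x = 0"
proof -
  define \<gamma> where "\<gamma> = (\<Sum>i<p. \<Sum>j<i. z ^ j)"
  have gk: "\<gamma> \<in> k" unfolding \<gamma>_def by (rule gam_in_k[OF zk])
  have "of_nat p = \<gamma> * (1 - z)" using prim_root_p_eq[OF p z] by (simp add: \<gamma>_def mult.commute)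
  hence "sm (of_nat p) x = sm \<gamma> (sm (1 - z) x)" using sm_mult[OF gk k_diff[OF k_one zk]] by simp
  also have "\<dots> = 0" using x by (simp add: sm_zero_r gk)
  finally show ?thesis by (rule good_inj[OF g])
qed

lemma ev_lin: "ev t [:a, b:] x = sm a x + sm b (t x)"
proof -
  have "ev t [:a, b:] x = (\<Sum>i<2. sm (coeff [:a, b:] i) ((t ^^ i) x))"
    by (rule ev_bound) (simp add: degree_pCons_le le_imp_less_Suc)
  also have "\<dots> = sm a x + sm b (t x)" by (simp add: numeral_2_eq_2)
  finally show ?thesis .
qed

lemma coprime_case:
  assumes rk: "\<rho> \<in> k" and r'k: "\<rho>' \<in> k" and gk: "\<gamma> \<in> k" and meq: "of_nat m = \<rho> * \<gamma>"
    and m: "prime m" and l: "prime l" and lm: "l \<noteq> m"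
    and L: "\<forall>f\<in>A. \<forall>x. x = sm \<rho> (f x) \<longrightarrow> x = 0"
    and t: "t \<in> A" and S: "kpoly S"
    and ev0: "ev t ([:of_nat l:] * (1 + [:0, \<rho> * \<rho>':] * S) + [:0, \<rho> * \<rho>':] ^ (l - 1)) y = 0"
  shows "y = 0"
proof -
  define c where "c = \<rho> * \<rho>'"
  have ck: "c \<in> k" unfolding c_def by (intro k_mul rk r'k)
  have "coprime l m" using primes_coprime[OF l m lm] .
  hence "coprime (int l) (int m)" by simp
  hence "gcd (int l) (int m) = 1" by simp
  then obtain a b :: int where ab: "a * int l + b * int m = 1" using bezout_int[of "int l" "int m"] by auto
  hence "(of_int (a * int l + b * int m) :: complex) = 1" by simp
  hence "of_int a * of_nat l + of_int b * of_nat m = (1::complex)" by simp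
  hence "of_int a * of_nat l + of_int b * (\<rho> * \<gamma>) = (1::complex)" by (simp only: meq)
  hence abc: "of_int a * of_nat l = 1 - of_int b * \<rho> * \<gamma>"
    by (intro eq_diff_eq[THEN iffD2]) (simp only: mult.assoc)
  define Y where "Y = [:0, c:]"
  define Q where "Q = [:of_int b:] * [:\<gamma>:] * (1 + Y * S) - [:0, \<rho>':] * S - [:of_int a:] * ([:0, \<rho>':] * Y ^ (l - 2))"
  define N where "N = [:of_nat l:] * (1 + Y * S) + Y ^ (l - 1)"
  have KY: "kpoly Y" unfolding Y_def by (simp add: kpoly_pCons k_zero ck kpoly_const)
  have KN: "kpoly N" unfolding N_def
    by (intro kpoly_add kpoly_mult kpoly_const k_of_nat kpoly_1 KY S kpoly_pow)
  have KQ: "kpoly Q" unfolding Q_def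
    by (intro kpoly_add kpoly_diff kpoly_mult kpoly_const k_of_int kpoly_1 KY S kpoly_pow gk
        kpoly_pCons k_zero r'k kpoly_0)
  have l2: "l \<ge> 2" using l prime_ge_2_nat by blast
  have h1: "[:of_int a:] * [:of_nat l:] = 1 - [:of_int b:] * [:\<rho>:] * [:\<gamma>:]"
  proof -
    have "[:of_int a:] * [:of_nat l:] = [:of_int a * of_nat l:]" by (simp add: mult.commute)
    also have "\<dots> = [:1 - of_int b * \<rho> * \<gamma>:]" by (simp only: abc)
    also have "\<dots> = 1 - [:of_int b:] * [:\<rho>:] * [:\<gamma>:]" by (simp add: one_pCons)
    finally show ?thesis .
  qed
  have h2: "Y = [:\<rho>:] * [:0, \<rho>':]" unfolding Y_def c_def by simp
  have lsuc: "l - 1 = Suc (l - 2)" using l2 by arith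
  have h3: "Y ^ (l - 1) = Y * Y ^ (l - 2)" by (simp only: lsuc power_Suc)
  have E: "[:of_int a:] * N = 1 - [:\<rho>:] * Q"
    unfolding N_def Q_def h3 by (rule ring_id1[OF h1 h2])
  have "ev t ([:of_int a:] * N) y = sm (of_int a) (ev t N y)" by (rule ev_cmult[OF k_of_int t KN])
  also have "ev t N y = 0" using ev0 unfolding N_def Y_def c_def .
  finally have "ev t (1 - [:\<rho>:] * Q) y = 0" by (simp only: E sm_zero_r[OF k_of_int])
  thus "y = 0" by (rule L_crit[OF rk L t KQ])
qed

lemma same_case:
  assumes rk: "\<rho> \<in> k" and r'k: "\<rho>' \<in> k" and fk: "f \<in> k"
    and ceq: "(\<rho> * \<rho>') ^ (l - 1) = of_nat l * \<rho> * f"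
    and linj: "\<forall>x. sm (of_nat l) x = 0 \<longrightarrow> x = 0"
    and L: "\<forall>f\<in>A. \<forall>x. x = sm \<rho> (f x) \<longrightarrow> x = 0"
    and t: "t \<in> A" and S: "kpoly S"
    and ev0: "ev t ([:of_nat l:] * (1 + [:0, \<rho> * \<rho>':] * S) + [:0, \<rho> * \<rho>':] ^ (l - 1)) y = 0"
  shows "y = 0"
proof -
  define Q where "Q = - ([:0, \<rho>':] * S) - [:f:] * [:0, 1:] ^ (l - 1)"
  have KQ: "kpoly Q" unfolding Q_def
    by (intro kpoly_neg kpoly_diff kpoly_mult kpoly_const S kpoly_pow fk kpoly_X kpoly_pCons k_zero r'k kpoly_0)
  have h2: "[:0, \<rho> * \<rho>':] = [:\<rho>:] * [:0, \<rho>':]" by simp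
  have h3: "[:0, \<rho> * \<rho>':] ^ (l - 1) = [:of_nat l:] * [:\<rho>:] * [:f:] * [:0, 1:] ^ (l - 1)"
  proof -
    have "[:0, \<rho> * \<rho>':] ^ (l - 1) = [:(\<rho> * \<rho>') ^ (l - 1):] * [:0, 1:] ^ (l - 1)" by (rule plin_pow)
    also have "\<dots> = [:of_nat l * \<rho> * f:] * [:0, 1:] ^ (l - 1)" by (simp only: ceq)
    also have "\<dots> = [:of_nat l:] * [:\<rho>:] * [:f:] * [:0, 1:] ^ (l - 1)" by (simp only: pconst_mult)
    finally show ?thesis .
  qed
  have E: "[:of_nat l:] * (1 + [:0, \<rho> * \<rho>':] * S) + [:0, \<rho> * \<rho>':] ^ (l - 1)
      = [:of_nat l:] * (1 - [:\<rho>:] * Q)"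
    unfolding Q_def by (rule ring_id2[OF h2 h3])
  have K1: "kpoly (1 - [:\<rho>:] * Q)" by (intro kpoly_diff kpoly_1 kpoly_mult kpoly_const rk KQ)
  have "ev t ([:of_nat l:] * (1 - [:\<rho>:] * Q)) y = sm (of_nat l) (ev t (1 - [:\<rho>:] * Q) y)"
    by (rule ev_cmult[OF k_of_nat t K1])
  hence "sm (of_nat l) (ev t (1 - [:\<rho>:] * Q) y) = 0" using ev0 by (simp only: E)
  hence "ev t (1 - [:\<rho>:] * Q) y = 0" using linj by blast
  thus "y = 0" by (rule L_crit[OF rk L t KQ])
qed

lemma pow_form: "c \<in> k \<Longrightarrow> \<exists>P. kpoly P \<and> [:1, c:] ^ m = 1 + [:0, c:] * P"
proof (induction m)
  case 0 then show ?case by (intro exI[of _ 0]) (simp add: kpoly_0)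
next
  case (Suc m)
  then obtain P where P: "kpoly P" "[:1, c:] ^ m = 1 + [:0, c:] * P" by blast
  have e: "[:1, c:] = 1 + [:0, c:]" by (simp add: one_pCons)
  have "[:1, c:] ^ Suc m = [:1, c:] * [:1, c:] ^ m" by (rule power_Suc)
  also have "\<dots> = (1 + [:0, c:]) * (1 + [:0, c:] * P)" unfolding P(2) by (simp only: e)
  also have "\<dots> = 1 + [:0, c:] * (1 + P + [:0, c:] * P)" by (rule ring_id3)
  finally have "[:1, c:] ^ Suc m = 1 + [:0, c:] * (1 + P + [:0, c:] * P)" .
  moreover have "kpoly (1 + P + [:0, c:] * P)"
    by (intro kpoly_add kpoly_1 P(1) kpoly_mult kpoly_pCons k_zero Suc.prems kpoly_const)
  ultimately show ?case by blast
qed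

lemma ev_Y: "ev t [:0, c:] x = sm c (t x)" by (simp add: ev_lin sm_zero_l)

lemma same_lemma:
  assumes p: "prime p" and z: "prim_root p z" and w: "prim_root p w" and zk: "z \<in> k"
  shows "\<exists>f\<in>k. ((1 - z) * (1 - w)) ^ (p - 1) = of_nat p * (1 - z) * f"
proof -
  obtain j where wj: "w = z ^ j" using prim_root_same[OF p z w] by blast
  define d where "d = (\<Sum>i<j. z ^ i)"
  have dk: "d \<in> k" unfolding d_def by (intro k_sum k_pow zk)
  have wd: "1 - w = (1 - z) * d" unfolding wj d_def by (rule one_diff_power_eq)
  define \<rho> where "\<rho> = 1 - z"
  have rk: "\<rho> \<in> k" unfolding \<rho>_def by (intro k_diff k_one zk)
  have p2: "p \<ge> 2" using p prime_ge_2_nat by blast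
  have "((1 - z) * (1 - w)) ^ (p - 1) = \<rho> ^ (p - 1) * \<rho> ^ (p - 1) * d ^ (p - 1)"
    unfolding wd \<rho>_def by (simp add: power_mult_distrib)
  also have "\<rho> ^ (p - 1) * \<rho> ^ (p - 1) = of_nat p * \<rho> * (if p = 2 then 1 else pe p z * \<rho> ^ (p - 3))"
  proof (cases "p = 2")
    case True
    have zz: "z ^ 2 = 1" "z \<noteq> 1" using prim_root_basic[OF p z] True by auto
    have "(z - 1) * (z + 1) = 0" using zz(1) by (simp add: algebra_simps power2_eq_square)
    hence "z = -1" using zz(2) by (simp add: add_eq_0_iff2)
    hence "\<rho> = 2" unfolding \<rho>_def by simp
    thus ?thesis using True by simp
  next
    case False
    hence p3: "p \<ge> 3" using p2 by simp
    have "\<rho> ^ (p - 1) * \<rho> ^ (p - 1) = \<rho> ^ p * (\<rho> * \<rho> ^ (p - 3))"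
    proof -
      have "(p - 1) + (p - 1) = p + Suc (p - 3)" using p3 by simp
      hence "\<rho> ^ (p - 1) * \<rho> ^ (p - 1) = \<rho> ^ (p + Suc (p - 3))" by (metis power_add)
      thus ?thesis by (simp only: power_add power_Suc)
    qed
    also have "\<rho> ^ p = of_nat p * pe p z" unfolding \<rho>_def by (rule prim_root_pow_eq[OF p z])
    finally show ?thesis using False by (simp add: algebra_simps)
  qed
  finally have "((1 - z) * (1 - w)) ^ (p - 1) = of_nat p * (1 - z) * ((if p = 2 then 1 else pe p z * \<rho> ^ (p - 3)) * d ^ (p - 1))"
    by (simp add: \<rho>_def algebra_simps)
  moreover have "(if p = 2 then 1 else pe p z * \<rho> ^ (p - 3)) * d ^ (p - 1) \<in> k"
    by (intro k_mul k_pow dk) (auto intro: k_one k_mul pe_in_k[OF zk] k_pow rk)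
  ultimately show ?thesis by blast
qed

lemma comm_formula:
  assumes pk: "\<pi> \<in> k" and tk: "\<tau> \<in> k" and s: "s \<in> A" and r: "r \<in> A"
  shows "(y + sm \<tau> (r y)) + sm \<pi> (s (y + sm \<tau> (r y)))
       = ((y + sm \<pi> (s y)) + sm \<tau> (r (y + sm \<pi> (s y)))) + sm (\<pi> * \<tau>) (s (r y) - r (s y))"
proof -
  have e1: "sm \<pi> (s (sm \<tau> (r y))) = sm (\<pi> * \<tau>) (s (r y))"
    by (simp add: A_sm[OF s tk] sm_mult[OF pk tk])
  have e2: "sm \<tau> (r (sm \<pi> (s y))) = sm (\<pi> * \<tau>) (r (s y))"
  proof -
    have "sm \<tau> (r (sm \<pi> (s y))) = sm \<tau> (sm \<pi> (r (s y)))" by (simp add: A_sm[OF r pk])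
    also have "\<dots> = sm (\<tau> * \<pi>) (r (s y))" by (rule sm_mult[OF tk pk, symmetric])
    finally show ?thesis by (simp add: mult.commute)
  qed
  have "(y + sm \<tau> (r y)) + sm \<pi> (s (y + sm \<tau> (r y))) = y + sm \<tau> (r y) + sm \<pi> (s y) + sm (\<pi> * \<tau>) (s (r y))"
    by (simp add: A_add_hom[OF s] sm_add_r[OF pk] e1 algebra_simps)
  moreover have "((y + sm \<pi> (s y)) + sm \<tau> (r (y + sm \<pi> (s y)))) = y + sm \<pi> (s y) + sm \<tau> (r y) + sm (\<pi> * \<tau>) (r (s y))"
    by (simp add: A_add_hom[OF r] sm_add_r[OF tk] e2 algebra_simps)
  moreover have "sm (\<pi> * \<tau>) (s (r y) - r (s y)) = sm (\<pi> * \<tau>) (s (r y)) - sm (\<pi> * \<tau>) (r (s y))"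
    by (rule sm_diff_r[OF k_mul[OF pk tk]])
  ultimately show ?thesis by (simp add: algebra_simps)
qed

lemma monoid_A: "monoid (alg_monoid A)"
  by (rule monoidI) (auto simp: alg_monoid_def A_comp A_id)


end

locale setting2 = setting +
  fixes \<pi> \<tau> :: complex and p q :: nat and \<gamma> \<gamma>' :: complex
  assumes pik: "\<pi> \<in> k" and tauk: "\<tau> \<in> k" and gk: "\<gamma> \<in> k" and g'k: "\<gamma>' \<in> k"
    and pp: "prime p" and qq: "prime q"
    and peq: "of_nat p = \<pi> * \<gamma>" and qeq: "of_nat q = \<tau> * \<gamma>'"
    and Lp: "\<forall>f\<in>A. \<forall>x. x = sm \<pi> (f x) \<longrightarrow> x = 0"
    and Lq: "\<forall>f\<in>A. \<forall>x. x = sm \<tau> (f x) \<longrightarrow> x = 0"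
    and piinj: "\<forall>x. sm \<pi> x = 0 \<longrightarrow> x = 0" and tauinj: "\<forall>x. sm \<tau> x = 0 \<longrightarrow> x = 0"
    and pinj: "\<forall>x. sm (of_nat p) x = 0 \<longrightarrow> x = 0"
    and same: "p = q \<Longrightarrow> \<exists>f\<in>k. (\<pi> * \<tau>) ^ (p - 1) = of_nat p * \<pi> * f"
begin

lemma ck: "\<pi> * \<tau> \<in> k" by (intro k_mul pik tauk)

lemma c_inj: "sm (\<pi> * \<tau>) x = 0 \<Longrightarrow> x = 0"
proof -
  assume "sm (\<pi> * \<tau>) x = 0"
  hence "sm \<pi> (sm \<tau> x) = 0" by (simp only: sm_mult[OF pik tauk])
  hence "sm \<tau> x = 0" using piinj by blast
  thus "x = 0" using tauinj by blast
qed

lemma core_prime: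
  assumes l: "prime l" and t: "t \<in> A" and u: "\<forall>x. (ev t [:1, \<pi> * \<tau>:] ^^ l) x = x"
  shows "t x = 0"
proof -
  define c where "c = \<pi> * \<tau>"
  have c_k: "c \<in> k" unfolding c_def by (rule ck)
  obtain S where S: "kpoly S"
    and eq: "[:1, c:] ^ l = 1 + [:0, c:] * ([:of_nat l:] * (1 + [:0, c:] * S) + [:0, c:] ^ (l - 1))"
    using binom_decomp[OF l c_k] by blast
  define N where "N = [:of_nat l:] * (1 + [:0, c:] * S) + [:0, c:] ^ (l - 1)"
  have KY: "kpoly [:0, c:]" by (simp add: kpoly_pCons k_zero c_k kpoly_const)
  have KN: "kpoly N" unfolding N_def
    by (intro kpoly_add kpoly_mult kpoly_const k_of_nat kpoly_1 KY S kpoly_pow)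
  have K1: "kpoly [:1, c:]" by (simp add: kpoly_pCons k_one c_k kpoly_const)
  have "x = (ev t [:1, c:] ^^ l) x" using spec[OF u, of x] unfolding c_def by (rule sym)
  also have "\<dots> = ev t ([:1, c:] ^ l) x" by (rule ev_pow[OF t K1, symmetric])
  also have "\<dots> = x + ev t ([:0, c:] * N) x"
    unfolding eq N_def[symmetric] by (simp only: ev_add[OF kpoly_1 kpoly_mult[OF KY KN]] ev_1)
  finally have "x + ev t ([:0, c:] * N) x = x" by (rule sym)
  hence "ev t ([:0, c:] * N) x = 0" by simp
  hence "ev t (N * [:0, c:]) x = 0" by (simp only: mult.commute)
  hence N0: "ev t N (sm c (t x)) = 0" by (simp only: ev_mult[OF t KN KY] ev_Y)
  have "sm c (t x) = 0"
  proof (cases "l = p")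
    case False
    show ?thesis
      by (rule coprime_case[OF pik tauk gk peq pp l False Lp t S])
         (use N0 in \<open>unfold N_def c_def\<close>)
  next
    case True
    show ?thesis
    proof (cases "p = q")
      case False
      with True have lq: "l \<noteq> q" by simp
      have cc: "c = \<tau> * \<pi>" by (simp add: c_def mult.commute)
      show ?thesis
        by (rule coprime_case[OF tauk pik g'k qeq qq l lq Lq t S])
           (use N0 in \<open>unfold N_def cc\<close>)
    next
      case pq: True
      obtain f where fk: "f \<in> k" and feq: "(\<pi> * \<tau>) ^ (p - 1) = of_nat p * \<pi> * f"
        using same[OF pq] by blast
      have ceq': "(\<pi> * \<tau>) ^ (l - 1) = of_nat l * \<pi> * f" using feq True by simp
      have linj: "\<forall>x. sm (of_nat l) x = 0 \<longrightarrow> x = 0" using pinj True by simp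
      show ?thesis
        by (rule same_case[OF pik tauk fk ceq' linj Lp t S]) (use N0 in \<open>unfold N_def c_def\<close>)
    qed
  qed
  thus "t x = 0" using c_inj unfolding c_def by blast
qed

lemma core_n:
  assumes "n > 0" "t \<in> A" "\<forall>x. (ev t [:1, \<pi> * \<tau>:] ^^ n) x = x"
  shows "\<forall>x. t x = 0"
  using assms
proof (induction n arbitrary: t rule: less_induct)
  case (less n)
  define c where "c = \<pi> * \<tau>"
  have c_k: "c \<in> k" unfolding c_def by (rule ck)
  show ?case
  proof (cases "n = 1")
    case True
    show ?thesis
    proof
      fix x
      have "ev t [:1, c:] x = x" using less.prems(3) True unfolding c_def by simp
      hence "sm c (t x) = 0" by (simp add: ev_lin sm_one)
      thus "t x = 0" using c_inj unfolding c_def by blast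
    qed
  next
    case False
    then obtain l where l: "prime l" "l dvd n" using prime_factor_nat by blast
    then obtain m where nm: "n = l * m" by blast
    have m0: "m > 0"
    proof (rule ccontr)
      assume "\<not> m > 0" hence "m = 0" by simp
      thus False using less.prems(1) nm by simp
    qed
    have l2: "l \<ge> 2" using l(1) prime_ge_2_nat by blast
    have "2 * m \<le> l * m" using l2 by (intro mult_right_mono) auto
    hence mn: "m < n" using nm m0 by linarith
    obtain P where P: "kpoly P" "[:1, c:] ^ m = 1 + [:0, c:] * P" using pow_form[OF c_k] by blast
    define t' where "t' = (\<lambda>x. t (ev t P x))"
    have t'A: "t' \<in> A" unfolding t'_def by (rule A_comp'[OF less.prems(2) ev_in_A[OF less.prems(2) P(1)]])
    have K1: "kpoly [:1, c:]" by (simp add: kpoly_pCons k_one c_k kpoly_const)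
    have KY: "kpoly [:0, c:]" by (simp add: kpoly_pCons k_zero c_k kpoly_const)
    have fe: "ev t' [:1, c:] = ev t [:1, c:] ^^ m"
    proof (rule ext)
      fix x
      have "(ev t [:1, c:] ^^ m) x = ev t ([:1, c:] ^ m) x" by (rule ev_pow[OF less.prems(2) K1, symmetric])
      also have "\<dots> = x + ev t ([:0, c:] * P) x"
        unfolding P(2) by (simp only: ev_add[OF kpoly_1 kpoly_mult[OF KY P(1)]] ev_1)
      also have "\<dots> = x + sm c (t' x)"
        by (simp only: ev_mult[OF less.prems(2) KY P(1)] ev_Y t'_def)
      also have "\<dots> = ev t' [:1, c:] x" by (simp add: ev_lin sm_one)
      finally show "ev t' [:1, c:] x = (ev t [:1, c:] ^^ m) x" by simp
    qed
    have "\<forall>x. (ev t' [:1, c:] ^^ l) x = x"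
    proof
      fix x
      have "(ev t' [:1, c:] ^^ l) x = (ev t [:1, c:] ^^ (m * l)) x" by (simp add: fe funpow_mult)
      also have "m * l = n" using nm by simp
      finally show "(ev t' [:1, c:] ^^ l) x = x" using less.prems(3) unfolding c_def by simp
    qed
    hence ul: "\<forall>x. (ev t' [:1, \<pi> * \<tau>:] ^^ l) x = x" unfolding c_def .
    have "\<forall>x. t' x = 0"
    proof
      fix x show "t' x = 0" by (rule core_prime[OF l(1) t'A ul])
    qed
    hence "\<forall>x. (ev t [:1, c:] ^^ m) x = x"
      by (simp add: fe[symmetric] ev_lin sm_one sm_zero_r c_k)
    hence "\<forall>x. (ev t [:1, \<pi> * \<tau>:] ^^ m) x = x" unfolding c_def .
    thus ?thesis by (rule less.IH[OF mn m0 less.prems(2)])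
  qed
qed


end

lemma pow_funpow:
  assumes "mult H = (\<circ>)" "one H = id"
  shows "x [^]\<^bsub>H\<^esub> (n::nat) = x ^^ n"
  by (induction n) (simp_all add: assms funpow_Suc_right del: funpow.simps(2))

theorem mainTheorem19:
  fixes p q :: nat and zp zq :: complex
    and sm :: "complex \<Rightarrow> 'm::ab_group_add \<Rightarrow> 'm"
    and A :: "('m \<Rightarrow> 'm) set"
  assumes "prime p" and "prime q"
    and "prim_root p zp" and "prim_root q zq"
    and "is_module (zring2 zp zq) sm"
    and "is_subalgebra (zring2 zp zq) sm A"
    and "good sm (of_nat p) A" and "good sm (of_nat q) A"
  shows "(\<forall>s\<in>A.
            (\<lambda>x. x + sm ((1 - zp) * (1 - zq)) (s x)) \<in> Units (alg_monoid A) \<and>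
            torsion_group (subgroup_gen (units_of (alg_monoid A))
                             {\<lambda>x. x + sm ((1 - zp) * (1 - zq)) (s x)})
            \<longrightarrow> s = (\<lambda>x. 0))
       \<and> (\<forall>s\<in>A. \<forall>r\<in>A.
            (\<lambda>x. x + sm (1 - zp) (s x)) \<in> Units (alg_monoid A) \<and>
            (\<lambda>x. x + sm (1 - zq) (r x)) \<in> Units (alg_monoid A) \<and>
            torsion_group (subgroup_gen (units_of (alg_monoid A))
                             {\<lambda>x. x + sm (1 - zp) (s x), \<lambda>x. x + sm (1 - zq) (r x)})
            \<longrightarrow> (\<lambda>x. x + sm (1 - zp) (s x)) \<circ> (\<lambda>x. x + sm (1 - zq) (r x))
              = (\<lambda>x. x + sm (1 - zq) (r x)) \<circ> (\<lambda>x. x + sm (1 - zp) (s x)))"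
proof -
  note pp = assms(1) and qq = assms(2) and zpr = assms(3) and zqr = assms(4)
  define k where "k = zring2 zp zq"
  interpret S: setting k sm A
    by unfold_locales (auto simp: k_def assms(5,6) intro: zring2.intros)
  have zpk: "zp \<in> k" and zqk: "zq \<in> k" by (auto simp: k_def intro: zring2.intros)
  define \<gamma> where "\<gamma> = (\<Sum>i<p. \<Sum>j<i. zp ^ j)"
  define \<gamma>' where "\<gamma>' = (\<Sum>i<q. \<Sum>j<i. zq ^ j)"
  interpret T: setting2 k sm A "1 - zp" "1 - zq" p q \<gamma> \<gamma>'
  proof unfold_locales
    show "1 - zp \<in> k" by (intro S.k_diff S.k_one zpk)
    show "1 - zq \<in> k" by (intro S.k_diff S.k_one zqk)
    show "\<gamma> \<in> k" unfolding \<gamma>_def by (rule S.gam_in_k[OF zpk])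
    show "\<gamma>' \<in> k" unfolding \<gamma>'_def by (rule S.gam_in_k[OF zqk])
    show "prime p" by (fact pp)
    show "prime q" by (fact qq)
    show "of_nat p = (1 - zp) * \<gamma>" unfolding \<gamma>_def by (rule prim_root_p_eq[OF pp zpr])
    show "of_nat q = (1 - zq) * \<gamma>'" unfolding \<gamma>'_def by (rule prim_root_p_eq[OF qq zqr])
    show "\<forall>f\<in>A. \<forall>x. x = sm (1 - zp) (f x) \<longrightarrow> x = 0" by (rule S.good_L[OF pp zpr zpk assms(7)])
    show "\<forall>f\<in>A. \<forall>x. x = sm (1 - zq) (f x) \<longrightarrow> x = 0" by (rule S.good_L[OF qq zqr zqk assms(8)])
    show "\<forall>x. sm (1 - zp) x = 0 \<longrightarrow> x = 0" using S.rho_inj[OF pp zpr zpk assms(7)] by blast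
    show "\<forall>x. sm (1 - zq) x = 0 \<longrightarrow> x = 0" using S.rho_inj[OF qq zqr zqk assms(8)] by blast
    show "\<forall>x. sm (of_nat p) x = 0 \<longrightarrow> x = 0" using S.good_inj[OF assms(7)] by blast
    show "\<exists>f\<in>k. ((1 - zp) * (1 - zq)) ^ (p - 1) = of_nat p * (1 - zp) * f" if pq: "p = q"
    proof -
      have "prim_root p zq" using zqr pq by simp
      thus ?thesis by (rule S.same_lemma[OF pp zpr _ zpk])
    qed
  qed
  define M where "M = alg_monoid A"
  have monM: "monoid M" unfolding M_def by (rule S.monoid_A)
  define G where "G = units_of M"
  have grpG: "group G" unfolding G_def by (rule monoid.units_group[OF monM])
  have carG: "carrier G = Units M" unfolding G_def by (simp add: units_of_carrier)
  have UA: "Units M \<subseteq> A" unfolding M_def by (auto simp: Units_def alg_monoid_def)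
  have mulG: "mult G = (\<circ>)" unfolding G_def M_def by (simp add: units_of_mult alg_monoid_def)
  have oneG: "one G = id" unfolding G_def M_def by (simp add: units_of_one alg_monoid_def)
  have torsion: "\<exists>n>0. (w ^^ n) = id"
    if tor: "torsion_group (subgroup_gen G X)" and w: "w \<in> generate G X" for X w
  proof -
    have "w \<in> carrier (subgroup_gen G X)" using w by (simp add: subgroup_gen_def)
    then obtain n :: nat where n: "n > 0" "w [^]\<^bsub>subgroup_gen G X\<^esub> n = \<one>\<^bsub>subgroup_gen G X\<^esub>"
      using tor unfolding torsion_group_def by blast
    have "w [^]\<^bsub>subgroup_gen G X\<^esub> n = w ^^ n"
      by (rule pow_funpow) (simp_all add: subgroup_gen_def mulG oneG)
    moreover have "\<one>\<^bsub>subgroup_gen G X\<^esub> = id" by (simp add: subgroup_gen_def oneG)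
    ultimately show ?thesis using n by auto
  qed
  have c_eq: "\<And>t x. S.ev t [:1, (1 - zp) * (1 - zq):] x = x + sm ((1 - zp) * (1 - zq)) (t x)"
    by (simp add: S.ev_lin S.sm_one)
  have part1: "s = (\<lambda>x. 0)"
    if s: "s \<in> A" and tor: "torsion_group (subgroup_gen G {\<lambda>x. x + sm ((1 - zp) * (1 - zq)) (s x)})" for s
  proof -
    define u where "u = (\<lambda>x. x + sm ((1 - zp) * (1 - zq)) (s x))"
    have "u \<in> generate G {u}" by (rule generate.incl) simp
    then obtain n where n: "n > 0" "u ^^ n = id" using torsion[of "{u}" u] tor unfolding u_def by blast
    have ue: "S.ev s [:1, (1 - zp) * (1 - zq):] = u" unfolding u_def by (rule ext) (rule c_eq)
    have "\<forall>x. s x = 0" by (rule T.core_n[OF n(1) s]) (simp add: ue n(2))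
    thus ?thesis by auto
  qed
  show ?thesis
  proof (intro conjI ballI impI)
    fix s assume "s \<in> A"
      "(\<lambda>x. x + sm ((1 - zp) * (1 - zq)) (s x)) \<in> Units (alg_monoid A) \<and>
       torsion_group (subgroup_gen (units_of (alg_monoid A)) {\<lambda>x. x + sm ((1 - zp) * (1 - zq)) (s x)})"
    thus "s = (\<lambda>x. 0)" using part1 unfolding G_def M_def by blast
  next
    fix s r assume s: "s \<in> A" and r: "r \<in> A" and H:
      "(\<lambda>x. x + sm (1 - zp) (s x)) \<in> Units (alg_monoid A) \<and>
       (\<lambda>x. x + sm (1 - zq) (r x)) \<in> Units (alg_monoid A) \<and>
       torsion_group (subgroup_gen (units_of (alg_monoid A))
          {\<lambda>x. x + sm (1 - zp) (s x), \<lambda>x. x + sm (1 - zq) (r x)})"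
    define u where "u = (\<lambda>x. x + sm (1 - zp) (s x))"
    define v where "v = (\<lambda>x. x + sm (1 - zq) (r x))"
    have uG: "u \<in> carrier G" and vG: "v \<in> carrier G" using H carG unfolding u_def v_def M_def by auto
    have tor: "torsion_group (subgroup_gen G {u, v})" using H unfolding u_def v_def G_def M_def by blast
    define u' where "u' = inv\<^bsub>G\<^esub> u"
    define v' where "v' = inv\<^bsub>G\<^esub> v"
    have u'G: "u' \<in> carrier G" and v'G: "v' \<in> carrier G"
      unfolding u'_def v'_def using group.inv_closed[OF grpG] uG vG by auto
    have u'A: "u' \<in> A" and v'A: "v' \<in> A" using u'G v'G carG UA by auto
    have uu': "u (u' x) = x" "u' (u x) = x" for x
      using group.r_inv[OF grpG uG] group.l_inv[OF grpG uG] unfolding u'_def mulG oneG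
      by (metis comp_apply id_apply)+
    have vv': "v (v' x) = x" "v' (v x) = x" for x
      using group.r_inv[OF grpG vG] group.l_inv[OF grpG vG] unfolding v'_def mulG oneG
      by (metis comp_apply id_apply)+
    define w where "w = u \<otimes>\<^bsub>G\<^esub> v \<otimes>\<^bsub>G\<^esub> u' \<otimes>\<^bsub>G\<^esub> v'"
    have "w \<in> generate G {u, v}" unfolding w_def u'_def v'_def
      by (intro generate.eng generate.incl generate.inv) auto
    then obtain n where n: "n > 0" "w ^^ n = id" using torsion tor by blast
    define t where "t = (\<lambda>y. s (r (u' (v' y))) - r (s (u' (v' y))))"
    have tA: "t \<in> A" unfolding t_def
      by (intro S.A_minus S.A_comp'[OF s] S.A_comp'[OF r] S.A_comp'[OF u'A v'A])
    have pk: "1 - zp \<in> k" and qk: "1 - zq \<in> k" by (intro S.k_diff S.k_one zpk zqk)+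
    have CF: "u (v y) = v (u y) + sm ((1 - zp) * (1 - zq)) (s (r y) - r (s y))" for y
      unfolding u_def v_def by (rule S.comm_formula[OF pk qk s r])
    have we: "w = S.ev t [:1, (1 - zp) * (1 - zq):]"
    proof (rule ext)
      fix x
      have "w x = u (v (u' (v' x)))" unfolding w_def by (simp add: mulG)
      also have "\<dots> = v (u (u' (v' x))) + sm ((1 - zp) * (1 - zq)) (t x)" by (simp add: CF t_def)
      also have "\<dots> = S.ev t [:1, (1 - zp) * (1 - zq):] x" by (simp add: uu' vv' c_eq)
      finally show "w x = S.ev t [:1, (1 - zp) * (1 - zq):] x" .
    qed
    have t0: "\<forall>x. t x = 0" by (rule T.core_n[OF n(1) tA]) (simp add: we[symmetric] n(2))
    have sr: "s (r y) = r (s y)" for y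
    proof -
      have "t (v (u y)) = 0" using t0 by blast
      thus ?thesis unfolding t_def by (simp add: uu' vv')
    qed
    show "(\<lambda>x. x + sm (1 - zp) (s x)) \<circ> (\<lambda>x. x + sm (1 - zq) (r x))
        = (\<lambda>x. x + sm (1 - zq) (r x)) \<circ> (\<lambda>x. x + sm (1 - zp) (s x))"
    proof (rule ext)
      fix y
      have "u (v y) = v (u y)" using CF[of y] by (simp add: sr S.sm_zero_r S.k_mul pk qk)
      thus "((\<lambda>x. x + sm (1 - zp) (s x)) \<circ> (\<lambda>x. x + sm (1 - zq) (r x))) y
        = ((\<lambda>x. x + sm (1 - zq) (r x)) \<circ> (\<lambda>x. x + sm (1 - zp) (s x))) y"
        unfolding u_def v_def by simp
    qed
  qed
qed

end
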